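(* Let $k\ge 3$. For every $m\in\mathbb{Z}_{>0}$, $E^{2m}\in M(1)^++C_2(V_L^+)$.
   Context: $L=\mathbb{Z}\alpha$, $\langle\alpha,\alpha\rangle=2k$; $V_L=M(1)\otimes\mathbb{C}[L]$ the lattice VOA, $\theta$ the involution $\alpha(-n_1)\cdots\alpha(-n_r)\otimes e^{\beta}\mapsto(-1)^r\alpha(-n_1)\cdots\alpha(-n_r)\otimes e^{-\beta}$, $V_L^+$ its fixed points, $M(1)^{\pm}$ the $\pm1$-eigenspaces of $\theta$ on $M(1)$ (spanned by monomials $\alpha(-n_1)\cdots\alpha(-n_r)\mathbf 1$ with $r$ even, resp. odd). We write $E^m=e^{m\alpha}+e^{-m\alpha}$, $F^m=e^{m\alpha}-e^{-m\alpha}$ (identifying $e^{\beta}$ with $\mathbf 1\otimes e^\beta$). $C_2(V)$ is the span of $\{v_{-2}u:u,v\in V\}$. *)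

theory Defs
  imports Complex_Main "HOL-Library.Multiset" "HOL-Library.Groups_Big_Fun"
begin

(* Basis of V_L = M(1) \<otimes> C[L], L = Z\<alpha>, <\<alpha>,\<alpha>> = 2k:
   (M, g) stands for  \<alpha>(-n_1)...\<alpha>(-n_r) 1 \<otimes> e^{g\<alpha>}  where M = {#n_1,...,n_r#}
   (all n_i \<ge> 1).  Vectors are finitely supported coefficient functions. *)
type_synonym bidx = "nat multiset \<times> int"
type_synonym vec = "bidx \<Rightarrow> complex"

definition bas :: "bidx \<Rightarrow> vec" where
  "bas b = (\<lambda>c. if c = b then 1 else 0)"

definition vsmult :: "complex \<Rightarrow> vec \<Rightarrow> vec" where
  "vsmult a v = (\<lambda>c. a * v c)"

definition lin :: "(bidx \<Rightarrow> vec) \<Rightarrow> vec \<Rightarrow> vec" where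
  "lin T v = (\<lambda>c. \<Sum>b\<in>{b. v b \<noteq> 0}. v b * T b c)"

definition fsum :: "('i \<Rightarrow> vec) \<Rightarrow> vec" where
  "fsum F = (\<lambda>c. Sum_any (\<lambda>i. F i c))"

(* Heisenberg operators \<alpha>(n): \<alpha>(-n) multiplication, \<alpha>(n) = 2k n \<partial>/\<partial>x_n (n>0),
   \<alpha>(0) acts on e^{g\<alpha>} by <\<alpha>, g\<alpha>> = 2kg *)
definition amode :: "nat \<Rightarrow> int \<Rightarrow> vec \<Rightarrow> vec" where
  "amode k n = lin (\<lambda>(M, g).
     if n < 0 then bas (M + {#nat (- n)#}, g)
     else if n = 0 then vsmult (of_int (2 * int k * g)) (bas (M, g))
     else vsmult (of_int (2 * int k * n * int (count M (nat n)))) (bas (M - {#nat n#}, g)))"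

(* product of Heisenberg operators, applied right-to-left along the list *)
definition aprod :: "nat \<Rightarrow> int list \<Rightarrow> vec \<Rightarrow> vec" where
  "aprod k ns v = fold (\<lambda>n w. amode k n w) ns v"

definition parts :: "nat \<Rightarrow> nat multiset set" where
  "parts j = {l. sum_mset l = j \<and> 0 \<notin># l}"

definition pcoef :: "complex \<Rightarrow> nat multiset \<Rightarrow> complex" where
  "pcoef c l = (\<Prod>n\<in>set_mset l. (c / of_nat n) ^ (count l n) / of_nat (fact (count l n)))"

(* coefficient of z^j in E^-(-m\<alpha>,z) = exp(\<Sum>_{n>0} m\<alpha>(-n) z^n / n) *)
definition Sminus :: "nat \<Rightarrow> int \<Rightarrow> nat \<Rightarrow> vec \<Rightarrow> vec" where
  "Sminus k m j v = (\<lambda>x. \<Sum>l\<in>parts j. pcoef (of_int m) l *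
      aprod k (map (\<lambda>n. - int n) (sorted_list_of_multiset l)) v x)"

(* coefficient of z^{-j} in E^+(-m\<alpha>,z) = exp(-\<Sum>_{n>0} m\<alpha>(n) z^{-n} / n) *)
definition Splus :: "nat \<Rightarrow> int \<Rightarrow> nat \<Rightarrow> vec \<Rightarrow> vec" where
  "Splus k m j v = (\<lambda>x. \<Sum>l\<in>parts j. pcoef (- of_int m) l *
      aprod k (map int (sorted_list_of_multiset l)) v x)"

(* (e^{m\<alpha>})_(q), where Y(e^\<beta>,z) = E^-(-\<beta>,z) E^+(-\<beta>,z) e_\<beta> z^\<beta> = \<Sum> (e^\<beta>)_(q) z^{-q-1}
   (trivial cocycle: L is even of rank one) *)
definition emode :: "nat \<Rightarrow> int \<Rightarrow> int \<Rightarrow> vec \<Rightarrow> vec" where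
  "emode k m q = lin (\<lambda>(M, g). fsum (\<lambda>j::nat.
     let i = - q - 1 - 2 * int k * m * g + int j in
     if 0 \<le> i then Sminus k m (nat i) (Splus k m j (bas (M, g + m))) else (\<lambda>_. 0)))"

(* modes (\<alpha>(-n_1)..\<alpha>(-n_r) e^{g\<alpha>})_(q), by recursion on r via the iterate formula
   (a_(p) b)_(q) = \<Sum>_{j\<ge>0} (-1)^j (p choose j) (a_(p-j) b_(q+j) - (-1)^p b_(p+q-j) a_(j)),
   with a = \<alpha>(-1)1, a_(p) = \<alpha>(p), p = -n, n = Max M. First argument r = size M. *)
primrec ym :: "nat \<Rightarrow> nat \<Rightarrow> nat multiset \<Rightarrow> int \<Rightarrow> int \<Rightarrow> vec \<Rightarrow> vec" where
  "ym k 0 M g q u = emode k g q u"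
| "ym k (Suc r) M g q u =
     (let n = Max_mset M; M' = M - {#n#} in
      fsum (\<lambda>j::nat. \<lambda>c.
        (-1) ^ j * ((- of_nat n :: complex) gchoose j) *
        (amode k (- int n - int j) (ym k r M' g (q + int j) u) c
         - (-1) ^ n * ym k r M' g (- int n + q - int j) (amode k (int j) u) c)))"

definition vmode :: "nat \<Rightarrow> vec \<Rightarrow> int \<Rightarrow> vec \<Rightarrow> vec" where
  "vmode k v q u = (\<lambda>c. \<Sum>b\<in>{b. v b \<noteq> 0}.
      v b * ym k (size (fst b)) (fst b) (snd b) q u c)"

definition VL :: "vec set" where
  "VL = {v. finite {b. v b \<noteq> 0} \<and> (\<forall>M g. 0 \<in># M \<longrightarrow> v (M, g) = 0)}"

definition theta :: "vec \<Rightarrow> vec" where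
  "theta v = (\<lambda>(M, g). (-1) ^ (size M) * v (M, - g))"

definition VLplus :: "vec set" where
  "VLplus = {v \<in> VL. theta v = v}"

definition M1plus :: "vec set" where
  "M1plus = {v \<in> VL. \<forall>M g. v (M, g) \<noteq> 0 \<longrightarrow> g = 0 \<and> even (size M)}"

definition cspan :: "vec set \<Rightarrow> vec set" where
  "cspan S = {v. \<exists>(n::nat) (c::nat \<Rightarrow> complex) s. (\<forall>i<n. s i \<in> S) \<and>
                   v = (\<lambda>x. \<Sum>i<n. c i * s i x)}"

definition C2plus :: "nat \<Rightarrow> vec set" where
  "C2plus k = cspan {vmode k v (-2) u | u v. u \<in> VLplus \<and> v \<in> VLplus}"

definition Evec :: "int \<Rightarrow> vec" where
  "Evec m = (\<lambda>x. bas ({#}, m) x + bas ({#}, - m) x)"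

end

theory Submission
  imports Defs
begin

lemma size_le_sum_mset: "0 \<notin># (l::nat multiset) \<Longrightarrow> size l \<le> sum_mset l"
  by (induction l) auto

lemma elem_le_sum_mset: "(x::nat) \<in># l \<Longrightarrow> x \<le> sum_mset l"
  by (induction l) auto

lemma finite_parts: "finite (parts j)"
proof -
  have "parts j \<subseteq> mset ` {xs. set xs \<subseteq> {..j} \<and> length xs \<le> j}"
  proof
    fix l assume l: "l \<in> parts j"
    hence "l = mset (sorted_list_of_multiset l)" by simp
    moreover have "set (sorted_list_of_multiset l) \<subseteq> {..j}"
      using l elem_le_sum_mset unfolding parts_def by auto
    moreover have "length (sorted_list_of_multiset l) \<le> j"
    proof -
      have "length (sorted_list_of_multiset l) = size (mset (sorted_list_of_multiset l))"
        by (simp only: size_mset)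
      also have "\<dots> = size l" by simp
      finally show ?thesis using l size_le_sum_mset[of l] unfolding parts_def by simp
    qed
    ultimately show "l \<in> mset ` {xs. set xs \<subseteq> {..j} \<and> length xs \<le> j}" by (intro image_eqI[of l mset "sorted_list_of_multiset l"]) auto
  qed
  thus ?thesis by (rule finite_subset) (simp add: finite_lists_length_le)
qed

lemma parts_0: "parts 0 = {{#}}"
  unfolding parts_def by (auto simp: sum_mset_0_iff) (metis multiset_nonemptyE)

lemma pcoef_empty: "pcoef c {#} = 1" unfolding pcoef_def by simp

lemma pcoef_single: "n > 0 \<Longrightarrow> pcoef c {#n#} = c / of_nat n" unfolding pcoef_def by simp

lemma pcoef_neg: "pcoef (- c) l = (-1) ^ size l * pcoef c l"
proof -
  have "pcoef (- c) l = (\<Prod>n\<in>set_mset l. (-1) ^ count l n * ((c / of_nat n) ^ count l n / of_nat (fact (count l n))))"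
    unfolding pcoef_def by (intro prod.cong) (auto simp: power_mult_distrib[symmetric])
  also have "\<dots> = (\<Prod>n\<in>set_mset l. (-1) ^ count l n) * pcoef c l"
    unfolding pcoef_def prod.distrib by simp
  also have "(\<Prod>n\<in>set_mset l. (-1::complex) ^ count l n) = (-1) ^ size l"
    by (simp add: power_sum size_multiset_overloaded_eq)
  finally show ?thesis .
qed

lemma lin_sum: "finite S \<Longrightarrow> {b. v b \<noteq> 0} \<subseteq> S \<Longrightarrow> lin T v c = (\<Sum>b\<in>S. v b * T b c)"
  unfolding lin_def by (rule sum.mono_neutral_left) auto

lemma lin_bas: "lin T (bas b) = T b"
proof
  fix c show "lin T (bas b) c = T b c"
    by (subst lin_sum[of "{b}"]) (auto simp: bas_def)
qed

lemma lin_zero: "lin T (\<lambda>_. 0) = (\<lambda>_. 0)"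
  unfolding lin_def by simp

lemma lin_smult: "lin T (vsmult a v) = vsmult a (lin T v)"
proof (cases "a = 0")
  case True thus ?thesis unfolding lin_def vsmult_def by simp
next
  case False
  hence "{b. vsmult a v b \<noteq> 0} = {b. v b \<noteq> 0}" unfolding vsmult_def by auto
  thus ?thesis unfolding lin_def vsmult_def by (auto simp: sum_distrib_left mult.assoc)
qed

lemma vsmult_0: "vsmult 0 v = (\<lambda>_. 0)" unfolding vsmult_def by simp

lemma amode_zero: "amode k n (\<lambda>_. 0) = (\<lambda>_. 0)" unfolding amode_def by (rule lin_zero)
lemma amode_smult: "amode k n (vsmult a v) = vsmult a (amode k n v)" unfolding amode_def by (rule lin_smult)

lemma aprod_zero: "aprod k ns (\<lambda>_. 0) = (\<lambda>_. 0)"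
  unfolding aprod_def by (induction ns) (auto simp: amode_zero)

lemma aprod_smult: "aprod k ns (vsmult a v) = vsmult a (aprod k ns v)"
  unfolding aprod_def by (induction ns arbitrary: v) (auto simp: amode_smult)

lemma aprod_Cons: "aprod k (n # ns) v = aprod k ns (amode k n v)"
  unfolding aprod_def by simp

lemma amode_neg_bas: "n > 0 \<Longrightarrow> amode k (- int n) (bas (M, g)) = bas (M + {#n#}, g)"
  unfolding amode_def lin_bas by simp

lemma amode_pos_bas: "n > 0 \<Longrightarrow> amode k (int n) (bas (M, g)) =
   vsmult (of_int (2 * int k * int n * int (count M n))) (bas (M - {#n#}, g))"
  unfolding amode_def lin_bas by simp

lemma aprod_neg_bas: "\<forall>n\<in>set xs. n > 0 \<Longrightarrow>
   aprod k (map (\<lambda>n. - int n) xs) (bas (M, g)) = bas (M + mset xs, g)"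
proof (induction xs arbitrary: M)
  case Nil thus ?case by (simp add: aprod_def)
next
  case (Cons x xs) thus ?case by (simp add: aprod_Cons amode_neg_bas add.assoc)
qed


lemma Sminus_0: "Sminus k c 0 v = v"
  unfolding Sminus_def parts_0 by (simp add: pcoef_empty aprod_def)

lemma Splus_0: "Splus k c 0 v = v"
  unfolding Splus_def parts_0 by (simp add: pcoef_empty aprod_def)

lemma Sminus_zero: "Sminus k c i (\<lambda>_. 0) = (\<lambda>_. 0)"
  unfolding Sminus_def by (simp add: aprod_zero)

lemma Sminus_smult: "Sminus k c i (vsmult a v) = vsmult a (Sminus k c i v)"
  unfolding Sminus_def aprod_smult unfolding vsmult_def by (simp add: sum_distrib_left mult.left_commute)

lemma parts_pos: "l \<in> parts i \<Longrightarrow> \<forall>n\<in>set (sorted_list_of_multiset l). n > 0"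
  unfolding parts_def by (auto intro!: gr0I)

lemma Sminus_bas: "Sminus k c i (bas (M0, g)) = (\<lambda>x. \<Sum>l\<in>parts i. pcoef c l * bas (M0 + l, g) x)"
  unfolding Sminus_def
  by (intro ext sum.cong refl) (simp add: aprod_neg_bas[OF parts_pos])

lemma Sminus_bas_val: "Sminus k c i (bas (M0, g)) (M, g') =
   (if g' = g \<and> M0 \<subseteq># M \<and> M - M0 \<in> parts i then pcoef c (M - M0) else 0)"
proof -
  have "Sminus k c i (bas (M0, g)) (M, g') =
     (\<Sum>l\<in>parts i. if M - M0 = l then (if g' = g \<and> M0 \<subseteq># M then pcoef c l else 0) else 0)"
    unfolding Sminus_bas
    by (intro sum.cong refl) (auto simp: bas_def)
  also have "\<dots> = (if M - M0 \<in> parts i then (if g' = g \<and> M0 \<subseteq># M then pcoef c (M - M0) else 0) else 0)"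
    by (rule sum.delta'[OF finite_parts])
  finally show ?thesis by auto
qed

lemma aprod_pos_single: "\<forall>n\<in>set xs. n > 0 \<Longrightarrow>
  aprod k (map int xs) (bas ({#N#}, h)) = (if xs = [] then bas ({#N#}, h)
     else if xs = [N] then vsmult (of_int (2 * int k * int N)) (bas ({#}, h)) else (\<lambda>_. 0))"
proof (cases xs)
  case Nil thus ?thesis by (simp add: aprod_def)
next
  case (Cons x rest)
  assume pos: "\<forall>n\<in>set xs. n > 0"
  show ?thesis
  proof (cases "x = N")
    case False
    thus ?thesis using Cons pos
      by (simp add: aprod_Cons amode_pos_bas vsmult_0 aprod_zero)
  next
    case True
    show ?thesis
    proof (cases rest)
      case Nil thus ?thesis using Cons True pos by (simp add: aprod_Cons amode_pos_bas aprod_def)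
    next
      case (Cons y r)
      have z: "amode k (int y) (bas ({#}, h)) = (\<lambda>_. 0)"
        using Cons \<open>xs = x # rest\<close> pos by (simp add: amode_pos_bas vsmult_0)
      have vz: "vsmult a (\<lambda>_. 0) = (\<lambda>_. 0)" for a unfolding vsmult_def by simp
      show ?thesis using Cons \<open>xs = x # rest\<close> True pos
        by (simp add: aprod_Cons amode_pos_bas amode_smult z vz aprod_zero)
    qed
  qed
qed

lemma sorted_single_iff: "(sorted_list_of_multiset l = [N]) = (l = {#N#})"
proof
  assume "sorted_list_of_multiset l = [N]"
  hence "mset (sorted_list_of_multiset l) = mset [N]" by simp
  thus "l = {#N#}" by simp
qed simp

lemma sorted_nil_iff: "(sorted_list_of_multiset l = []) = (l = {#})"
proof
  assume "sorted_list_of_multiset l = []"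
  hence "mset (sorted_list_of_multiset l) = mset []" by simp
  thus "l = {#}" by simp
qed simp

lemma Splus_single:
  assumes "N > 0"
  shows "Splus k c j (bas ({#N#}, h)) = (if j = 0 then bas ({#N#}, h)
     else if j = N then vsmult (- (2 * of_nat k * of_int c)) (bas ({#}, h)) else (\<lambda>_. 0))"
proof (cases "j = 0")
  case True thus ?thesis by (simp add: Splus_0)
next
  case False
  have ne: "l \<in> parts j \<Longrightarrow> sorted_list_of_multiset l \<noteq> []" for l
    using False unfolding parts_def sorted_nil_iff by auto
  have "Splus k c j (bas ({#N#}, h)) = (\<lambda>x. \<Sum>l\<in>parts j. if {#N#} = l then
      pcoef (- of_int c) l * vsmult (of_int (2 * int k * int N)) (bas ({#}, h)) x else 0)"
    unfolding Splus_def
    by (intro ext sum.cong refl) (auto simp: aprod_pos_single[OF parts_pos] ne sorted_single_iff)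
  also have "\<dots> = (\<lambda>x. if {#N#} \<in> parts j then
      pcoef (- of_int c) {#N#} * vsmult (of_int (2 * int k * int N)) (bas ({#}, h)) x else 0)"
    by (intro ext sum.delta'[OF finite_parts])
  also have "({#N#} \<in> parts j) = (j = N)" using assms unfolding parts_def by auto
  finally show ?thesis using False assms
    by (auto simp: pcoef_single vsmult_def)
qed


lemma emode_single:
  assumes "N > 0"
  shows "emode k g0 q (bas ({#N#}, g)) x =
    (if 0 \<le> - q - 1 - 2 * int k * g0 * g then Sminus k g0 (nat (- q - 1 - 2 * int k * g0 * g)) (bas ({#N#}, g + g0)) x else 0) +
    (if 0 \<le> - q - 1 - 2 * int k * g0 * g + int N then Sminus k g0 (nat (- q - 1 - 2 * int k * g0 * g + int N))
        (vsmult (- (2 * of_nat k * of_int g0)) (bas ({#}, g + g0))) x else 0)"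
proof -
  define ET where "ET = (\<lambda>j::nat. (let i = - q - 1 - 2 * int k * g0 * g + int j in
     if 0 \<le> i then Sminus k g0 (nat i) (Splus k g0 j (bas ({#N#}, g + g0))) else (\<lambda>_. 0)) x)"
  have e: "emode k g0 q (bas ({#N#}, g)) x = Sum_any ET"
    unfolding emode_def lin_bas fsum_def ET_def by simp
  have sup: "{j. ET j \<noteq> 0} \<subseteq> {0, N}"
  proof
    fix j assume "j \<in> {j. ET j \<noteq> 0}"
    thus "j \<in> {0, N}" unfolding ET_def Let_def using assms
      by (auto simp: Splus_single Sminus_zero split: if_splits)
  qed
  have "Sum_any ET = sum ET {0, N}" by (rule Sum_any.expand_superset) (use sup in auto)
  also have "\<dots> = ET 0 + ET N" using assms by simp
  finally show ?thesis unfolding e ET_def Let_def using assms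
    by (simp add: Splus_single Splus_0)
qed


lemma emode_lin: "finite S \<Longrightarrow> {b. u b \<noteq> 0} \<subseteq> S \<Longrightarrow>
   emode k g0 q u x = (\<Sum>b\<in>S. u b * emode k g0 q (bas b) x)"
  unfolding emode_def lin_bas by (rule lin_sum)

lemma vmode_lin: "finite S \<Longrightarrow> {b. v b \<noteq> 0} \<subseteq> S \<Longrightarrow>
   vmode k v q u x = (\<Sum>b\<in>S. v b * ym k (size (fst b)) (fst b) (snd b) q u x)"
  unfolding vmode_def by (rule sum.mono_neutral_left) auto

lemma Sminus_smult_bas_val: "Sminus k c i (vsmult a (bas (M0, g))) (M, g') =
   a * (if g' = g \<and> M0 \<subseteq># M \<and> M - M0 \<in> parts i then pcoef c (M - M0) else 0)"
  by (simp only: Sminus_smult) (simp add: vsmult_def Sminus_bas_val)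

theorem lemma4p1:
  fixes k :: nat and m :: int
  assumes "k \<ge> 3" and "m > 0"
  shows "\<exists>a c. a \<in> M1plus \<and> c \<in> C2plus k \<and> Evec (2 * m) = (\<lambda>x. a x + c x)"
proof -
  define N where "N = nat (2 * int k * m * m - 1)"
  have mm: "m * m \<ge> 1" using mult_mono[of 1 m 1 m] assms(2) by simp
  have "2 * int k * (m * m) \<ge> 6" using mult_mono[of 6 "2*int k" 1 "m*m"] assms mm by simp
  hence six: "2 * int k * m * m \<ge> 6" by (simp only: mult.assoc)
  have hN: "int N = 2 * int k * m * m - 1" unfolding N_def using six by linarith
  have Npos: "N > 0" using hN six by linarith
  define K :: complex where "K = 2 * of_nat k * of_int m"
  have K0: "K \<noteq> 0" unfolding K_def using assms by auto
  define A where "A = (\<lambda>c i M0 M. if M0 \<subseteq># M \<and> M - M0 \<in> parts i then pcoef (of_int c) (M - M0) else (0::complex))"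
  define Z :: vec where "Z = (\<lambda>(M, g). if g = 0 then - A m (N+2) {#N#} M + K * A m (2*N+2) {#} M
       + A (-m) (N+2) {#N#} M + K * A (-m) (2*N+2) {#} M else 0)"
  define u :: vec where "u = (\<lambda>x. bas ({#N#}, m) x - bas ({#N#}, - m) x)"
  define W where "W = vmode k (Evec m) (-2) u"
  have mne: "m \<noteq> - m" using assms by simp
  have T1: "emode k m (-2) (bas ({#N#}, m)) x = - K * bas ({#}, 2 * m) x" for x
  proof -
    have a: "- (-2) - 1 - 2 * int k * m * m = - int N" using hN by simp
    show ?thesis using emode_single[OF Npos, of k m "-2" m x] Npos unfolding a
      by (simp add: Sminus_0 vsmult_def K_def)
  qed
  have T4: "emode k (-m) (-2) (bas ({#N#}, -m)) x = K * bas ({#}, - 2 * m) x" for x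
  proof -
    have a: "- (-2) - 1 - 2 * int k * - m * - m = - int N" using hN by simp
    show ?thesis using emode_single[OF Npos, of k "-m" "-2" "-m" x] Npos unfolding a
      by (simp add: Sminus_0 vsmult_def K_def)
  qed
  have n2: "nat (2 * int N) = 2 * N" by (simp add: nat_mult_distrib)
  have T2: "emode k m (-2) (bas ({#N#}, -m)) x = Sminus k m (N+2) (bas ({#N#}, 0)) x
      + Sminus k m (2*N+2) (vsmult (-K) (bas ({#}, 0))) x" for x
  proof -
    have a: "- (-2) - 1 - 2 * int k * m * - m = int N + 2" using hN by simp
    show ?thesis using emode_single[OF Npos, of k m "-2" "-m" x] Npos unfolding a
      by (simp add: K_def nat_add_distrib n2)
  qed
  have T3: "emode k (-m) (-2) (bas ({#N#}, m)) x = Sminus k (-m) (N+2) (bas ({#N#}, 0)) x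
      + Sminus k (-m) (2*N+2) (vsmult K (bas ({#}, 0))) x" for x
  proof -
    have a: "- (-2) - 1 - 2 * int k * - m * m = int N + 2" using hN by simp
    show ?thesis using emode_single[OF Npos, of k "-m" "-2" m x] Npos unfolding a
      by (simp add: K_def nat_add_distrib n2)
  qed
  have usup: "{b. u b \<noteq> 0} \<subseteq> {({#N#}, m), ({#N#}, -m)}" unfolding u_def bas_def by (auto split: if_splits)
  have Esup: "{b. Evec m b \<noteq> 0} \<subseteq> {({#}, m), ({#}, -m)}" unfolding Evec_def bas_def by (auto split: if_splits)
  have Wx: "W x = (emode k m (-2) (bas ({#N#}, m)) x - emode k m (-2) (bas ({#N#}, -m)) x)
     + (emode k (-m) (-2) (bas ({#N#}, m)) x - emode k (-m) (-2) (bas ({#N#}, -m)) x)" for x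
  proof -
    have E1: "emode k g0 q u x = emode k g0 q (bas ({#N#},m)) x - emode k g0 q (bas ({#N#},-m)) x" for g0 q
      using emode_lin[OF _ usup, of k g0 q x] mne by (simp add: u_def bas_def)
    have V1: "W x = emode k m (-2) u x + emode k (-m) (-2) u x"
      using vmode_lin[OF _ Esup, of k "-2" u x] mne by (simp add: W_def Evec_def bas_def)
    show ?thesis unfolding V1 E1 ..
  qed
  have ZW: "W x = - K * (bas ({#}, 2 * m) x + bas ({#}, - (2 * m)) x) + Z x" for x
  proof (cases x)
    case (Pair M g)
    show ?thesis unfolding Wx T1 T2 T3 T4 Pair Sminus_bas_val Sminus_smult_bas_val
      by (simp add: Z_def A_def bas_def algebra_simps)
  qed
  have Asupp: "A c i M0 M \<noteq> 0 \<Longrightarrow> M0 \<subseteq># M \<and> M - M0 \<in> parts i" for c i M0 M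
    by (simp add: A_def split: if_splits)
  define P where "P = (\<lambda>M. ({#N#} \<subseteq># M \<and> M - {#N#} \<in> parts (N+2)) \<or> M \<in> parts (2*N+2))"
  have Zsupp: "Z (M, g) \<noteq> 0 \<Longrightarrow> g = 0 \<and> P M" for M g
  proof -
    assume z: "Z (M, g) \<noteq> 0"
    hence "g = 0" by (simp add: Z_def split: if_splits)
    moreover have "A m (N+2) {#N#} M \<noteq> 0 \<or> A m (2*N+2) {#} M \<noteq> 0 \<or> A (-m) (N+2) {#N#} M \<noteq> 0 \<or> A (-m) (2*N+2) {#} M \<noteq> 0"
      using z by (auto simp: Z_def split: if_splits)
    ultimately show ?thesis unfolding P_def using Asupp by fastforce
  qed
  have P0: "P M \<Longrightarrow> 0 \<notin># M" for M
  proof -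
    assume "P M"
    thus ?thesis unfolding P_def
    proof
      assume h: "{#N#} \<subseteq># M \<and> M - {#N#} \<in> parts (N + 2)"
      hence eqM: "M = {#N#} + (M - {#N#})" by (simp add: subset_mset.add_diff_inverse)
      have nz: "0 \<notin># M - {#N#}" using h unfolding parts_def by simp
      show ?thesis
      proof
        assume "0 \<in># M"
        hence "0 \<in># {#N#} + (M - {#N#})" using eqM by simp
        thus False using Npos nz by auto
      qed
    next
      assume "M \<in> parts (2 * N + 2)" thus ?thesis unfolding parts_def by simp
    qed
  qed
  have Zeven: "Z (M, g) \<noteq> 0 \<Longrightarrow> even (size M)" for M g
  proof (rule ccontr)
    assume z: "Z (M, g) \<noteq> 0" and od: "\<not> even (size M)"
    have e1: "A (-m) i {#N#} M = A m i {#N#} M" for i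
    proof (cases "{#N#} \<subseteq># M")
      case True
      hence "size (M - {#N#}) = size M - 1" by (simp add: size_Diff_submset)
      hence "even (size (M - {#N#}))" using od by (cases "size M") auto
      thus ?thesis unfolding A_def by (simp add: pcoef_neg)
    qed (simp add: A_def)
    have e2: "A (-m) i {#} M = - A m i {#} M" for i
      unfolding A_def using od by (simp add: pcoef_neg)
    have "Z (M, g) = 0" by (simp add: Z_def e1 e2)
    with z show False by simp
  qed
  define a :: vec where "a = (\<lambda>x. Z x / K)"
  define c :: vec where "c = (\<lambda>x. (- 1 / K) * W x)"
  have finP: "finite {b. a b \<noteq> 0}"
  proof (rule finite_subset)
    show "{b. a b \<noteq> 0} \<subseteq> (\<lambda>l. ({#N#} + l, 0)) ` parts (N+2) \<union> (\<lambda>l. (l, 0)) ` parts (2*N+2)"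
    proof
      fix b assume "b \<in> {b. a b \<noteq> 0}"
      then obtain M g where b: "b = (M, g)" and z: "Z (M, g) \<noteq> 0" unfolding a_def by (cases b) auto
      from Zsupp[OF z] have "g = 0" "P M" by auto
      thus "b \<in> (\<lambda>l. ({#N#} + l, 0)) ` parts (N+2) \<union> (\<lambda>l. (l, 0)) ` parts (2*N+2)"
        unfolding b P_def
        by (auto intro!: image_eqI simp: subset_mset.add_diff_inverse)
    qed
    show "finite ((\<lambda>l. ({#N#} + l, 0)) ` parts (N+2) \<union> (\<lambda>l. (l, 0 :: int)) ` parts (2*N+2))"
      by (simp add: finite_parts)
  qed
  have aM: "a \<in> M1plus"
    unfolding M1plus_def VL_def
  proof (intro CollectI conjI allI impI finP)
    fix M :: "nat multiset" and g :: int assume "0 \<in># M"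
    thus "a (M, g) = 0" unfolding a_def using Zsupp P0 by force
  next
    fix M :: "nat multiset" and g :: int assume "a (M, g) \<noteq> 0"
    hence z: "Z (M, g) \<noteq> 0" unfolding a_def by simp
    show "g = 0" using Zsupp[OF z] by simp
    show "even (size M)" using Zeven[OF z] .
  qed
  have uV: "u \<in> VLplus"
    unfolding VLplus_def VL_def
  proof (intro CollectI conjI allI impI)
    show "finite {b. u b \<noteq> 0}" by (rule finite_subset[OF usup]) simp
    fix M :: "nat multiset" and g :: int assume "0 \<in># M" thus "u (M, g) = 0" using Npos by (auto simp: u_def bas_def)
  next
    show "theta u = u" unfolding theta_def
      by (rule ext) (auto simp: u_def bas_def split: if_splits)
  qed
  have EV: "Evec m \<in> VLplus"
    unfolding VLplus_def VL_def
  proof (intro CollectI conjI allI impI)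
    show "finite {b. Evec m b \<noteq> 0}" by (rule finite_subset[OF Esup]) simp
    fix M :: "nat multiset" and g :: int assume "0 \<in># M" thus "Evec m (M, g) = 0" by (auto simp: Evec_def bas_def)
  next
    show "theta (Evec m) = Evec m" unfolding theta_def
      by (rule ext) (auto simp: Evec_def bas_def split: if_splits)
  qed
  have Wmem: "W \<in> {vmode k v (-2) u | u v. u \<in> VLplus \<and> v \<in> VLplus}"
    unfolding W_def using uV EV by blast
  have ceq: "c = (\<lambda>x. \<Sum>i<1::nat. (\<lambda>_. - 1 / K) i * (\<lambda>_. W) i x)"
    unfolding c_def by simp
  have cC: "c \<in> C2plus k"
    unfolding C2plus_def cspan_def
    apply (rule CollectI)
    apply (rule exI[where x=1])
    apply (rule exI[where x="\<lambda>_. - 1 / K"])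
    apply (rule exI[where x="\<lambda>_. W"])
    using Wmem ceq by simp
  have eq: "Evec (2 * m) = (\<lambda>x. a x + c x)"
  proof
    fix x show "Evec (2 * m) x = a x + c x"
      unfolding a_def c_def ZW Evec_def using K0 by (simp add: field_simps)
  qed
  show ?thesis using aM cC eq by blast
qed

end
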